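(* Run the mechanism BFM-SWM described in the context with arbitrary $B>0$, $\alpha>1$, $\beta>1$, $\epsilon>0$, $\ell\in\{1,2\}$, with all sellers behaving truthfully, and let $M$, $\rho_M$, $S^*$ be as defined in the context. If $M\ge 2$, then $$\rho_M\ \le\ 2\alpha\big(v(S^* )-p(S^* )\big).$$
   Context: Setting. $\mathcal{N}$ is a finite set of $n$ sellers. The valuation $v:2^{\mathcal{N}}\to\mathbb{R}_{\ge 0}$ satisfies $v(\emptyset)=0$ and is submodular (for $X\subseteq Y\subseteq\mathcal{N}$ and $u\notin Y$, $v(u\mid Y)\le v(u\mid X)$), not necessarily monotone, where $v(S\mid T)=v(S\cup T)-v(T)$, $v(u\mid T)=v(\{u\}\mid T)$. Each seller $u$ has a private cost $c(u)\ge 0$; $c(X)=\sum_{u\in X}c(u)$, $p(X)=\sum_{u\in X}p(u)$. $B>0$ is the budget, $[\ell]=\{1,\dots,\ell\}$. Sellers behave truthfully: a seller $u$ offered price $q$ accepts iff $c(u)\le q$. Mechanism BFM-SWM (inputs $B$, $\alpha>1$, $\beta>1$, $\epsilon>0$, $\ell\in\{1,2\}$): 1. Offer every seller the price $B$; let $R$ be the set of sellers who accept, and set $p(u)=B$ for $u\in R$. 2. Set $t=0$, $\rho_0=\epsilon/\alpha$, $u^*=\emptyset$ ($u^*$ is a set of at most one seller), and $S_{i,0}=\emptyset$ for $i\in[\ell]$. 3. Repeat rounds: set $t\leftarrow t+1$, $\rho_t=\alpha\rho_{t-1}$, $S_{i,t}=\emptyset$ for all $i\in[\ell]$. Process the sellers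 $u\in R\setminus(\bigcup_{i=1}^{\ell}S_{i,t-1}\cup u^* )$ one at a time in a fixed order. For each such $u$: pick $j\in\arg\max_{i\in[\ell]}v(u\mid S_{i,t})$ (current contents); update $p(u)\leftarrow\min\{p(u),\ v(u\mid S_{j,t})/(\beta+\rho_t/B)\}$ and offer $p(u)$ to $u$. If $u$ accepts: if $v(S_{j,t}\cup\{u\})-p(S_{j,t}\cup\{u\})>\rho_t$ (current prices), set $u^*\leftarrow\{u\}$ and end the round immediately; otherwise add $u$ to $S_{j,t}$. If $u$ rejects, remove $u$ from $R$. After the round, stop if $R\setminus\left(\bigcup_{i=1}^{\ell}(S_{i,t-1}\cup S_{i,t})\cup u^*\right)=\emptyset$; otherwise start another round. 4. Let $M$ be the final value of $t$ (the number of rounds). Output $S^*\in\arg\max_{A\in\{S_{i,t}: i\in[\ell],\ t\in\{M-1,M\}\}\cup\{u^*\}}\big(v(A)-p(A)\big)$, paying each $u\in S^*$ its current price $p(u)$; $p(S^* )$ is the total payment. *)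

theory Defs
  imports Complex_Main
begin

definition marg :: "('a set \<Rightarrow> real) \<Rightarrow> 'a \<Rightarrow> 'a set \<Rightarrow> real" where
  "marg v u S = v (insert u S) - v S"

definition submod_on :: "'a set \<Rightarrow> ('a set \<Rightarrow> real) \<Rightarrow> bool" where
  "submod_on N v \<longleftrightarrow> (\<forall>X Y u. X \<subseteq> Y \<longrightarrow> Y \<subseteq> N \<longrightarrow> u \<in> N \<longrightarrow> u \<notin> Y \<longrightarrow>
       marg v u Y \<le> marg v u X)"

definition rho :: "real \<Rightarrow> real \<Rightarrow> nat \<Rightarrow> real" where
  "rho \<alpha> \<epsilon> t = (\<epsilon> / \<alpha>) * \<alpha> ^ t"

definition argmax_rule :: "nat \<Rightarrow> ('a set \<Rightarrow> real) \<Rightarrow> (nat \<Rightarrow> 'a \<Rightarrow> (nat \<Rightarrow> 'a set) \<Rightarrow> nat) \<Rightarrow> bool" where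
  "argmax_rule l v ch \<longleftrightarrow> (\<forall>t u S. ch t u S \<in> {1..l} \<and>
       (\<forall>i\<in>{1..l}. marg v u (S i) \<le> marg v u (S (ch t u S))))"

text \<open>In-round state: (current sets S_{i,t}, prices, R, u*, round-ended flag).\<close>
type_synonym 'a rstate = "(nat \<Rightarrow> 'a set) \<times> ('a \<Rightarrow> real) \<times> 'a set \<times> 'a set \<times> bool"

definition seller_step ::
  "('a set \<Rightarrow> real) \<Rightarrow> ('a \<Rightarrow> real) \<Rightarrow> real \<Rightarrow> real \<Rightarrow> real \<Rightarrow>
   (nat \<Rightarrow> 'a \<Rightarrow> (nat \<Rightarrow> 'a set) \<Rightarrow> nat) \<Rightarrow> nat \<Rightarrow> 'a \<Rightarrow> 'a rstate \<Rightarrow> 'a rstate" where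
  "seller_step v c B \<beta> r ch t u st =
    (case st of (S, p, R, us, ended) \<Rightarrow>
      if ended then st else
      (let j = ch t u S;
           q = min (p u) (marg v u (S j) / (\<beta> + r / B));
           p' = p(u := q)
       in if c u \<le> q then
            (if v (insert u (S j)) - sum p' (insert u (S j)) > r
             then (S, p', R, {u}, True)
             else (S(j := insert u (S j)), p', R, us, False))
          else (S, p', R - {u}, us, False)))"

text \<open>Global state after round t: (S_{.,t-1}, S_{.,t}, prices, R, u*).\<close>
type_synonym 'a gstate = "(nat \<Rightarrow> 'a set) \<times> (nat \<Rightarrow> 'a set) \<times> ('a \<Rightarrow> real) \<times> 'a set \<times> 'a set"

definition do_round ::
  "'a list \<Rightarrow> nat \<Rightarrow> ('a set \<Rightarrow> real) \<Rightarrow> ('a \<Rightarrow> real) \<Rightarrow> real \<Rightarrow> real \<Rightarrow> real \<Rightarrow> real \<Rightarrow>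
   (nat \<Rightarrow> 'a \<Rightarrow> (nat \<Rightarrow> 'a set) \<Rightarrow> nat) \<Rightarrow> nat \<Rightarrow> 'a gstate \<Rightarrow> 'a gstate" where
  "do_round ord l v c B \<alpha> \<beta> \<epsilon> ch t g =
    (case g of (Sprev, S, p, R, us) \<Rightarrow>
      let cand = filter (\<lambda>u. u \<in> R \<and> u \<notin> (\<Union>i\<in>{1..l}. S i) \<and> u \<notin> us) ord;
          (S', p', R', us', _) =
             fold (seller_step v c B \<beta> (rho \<alpha> \<epsilon> t) ch t) cand
                  ((\<lambda>_. {}), p, R, us, False)
      in (S, S', p', R', us'))"

text \<open>State after t rounds (t = 0: after steps 1 and 2).\<close>
primrec run ::
  "'a list \<Rightarrow> nat \<Rightarrow> ('a set \<Rightarrow> real) \<Rightarrow> ('a \<Rightarrow> real) \<Rightarrow> real \<Rightarrow> real \<Rightarrow> real \<Rightarrow> real \<Rightarrow>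
   (nat \<Rightarrow> 'a \<Rightarrow> (nat \<Rightarrow> 'a set) \<Rightarrow> nat) \<Rightarrow> nat \<Rightarrow> 'a gstate" where
  "run ord l v c B \<alpha> \<beta> \<epsilon> ch 0 =
     ((\<lambda>_. {}), (\<lambda>_. {}), (\<lambda>_. B), {u \<in> set ord. c u \<le> B}, {})"
| "run ord l v c B \<alpha> \<beta> \<epsilon> ch (Suc t) =
     do_round ord l v c B \<alpha> \<beta> \<epsilon> ch (Suc t) (run ord l v c B \<alpha> \<beta> \<epsilon> ch t)"

definition stops :: "nat \<Rightarrow> 'a gstate \<Rightarrow> bool" where
  "stops l g = (case g of (Sprev, S, p, R, us) \<Rightarrow>
      R - ((\<Union>i\<in>{1..l}. Sprev i \<union> S i) \<union> us) = {})"

definition candidates :: "nat \<Rightarrow> 'a gstate \<Rightarrow> 'a set set" where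
  "candidates l g = (case g of (Sprev, S, p, R, us) \<Rightarrow>
      Sprev ` {1..l} \<union> S ` {1..l} \<union> {us})"

definition final_prices :: "'a gstate \<Rightarrow> 'a \<Rightarrow> real" where
  "final_prices g = (case g of (Sprev, S, p, R, us) \<Rightarrow> p)"

end

theory Submission imports Defs begin
lemma fold_ended: "fold (seller_step v c B \<beta> r ch t) xs (S,p,R,us,True) = (S,p,R,us,True)"
  by (induction xs) (simp_all add: seller_step_def)

lemma fold_inv:
  assumes am: "argmax_rule l v ch"
  shows "fold (seller_step v c B \<beta> r ch t) xs (S,p,R,us,e) = (S',p',R',us',e') \<Longrightarrow>
    (\<forall>y. p' y \<le> p y) \<and> R' \<subseteq> R \<and> (\<forall>i. S i \<subseteq> S' i \<and> S' i \<subseteq> S i \<union> set xs) \<and>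
    (\<not>e' \<longrightarrow> us' = us \<and> \<not>e) \<and>
    (e' \<and> \<not> e \<longrightarrow> (\<exists>u\<in>set xs. us' = {u} \<and> (\<exists>j\<in>{1..l}. v (insert u (S' j)) - sum p' (insert u (S' j)) > r))) \<and>
    (\<not> e' \<longrightarrow> (\<forall>x\<in>set xs. x \<in> R' \<longrightarrow> (\<exists>i\<in>{1..l}. x \<in> S' i)))"
proof (induction xs arbitrary: S p R us e)
  case Nil
  then show ?case by auto
next
  case (Cons x xs)
  show ?case
  proof (cases e)
    case True
    then show ?thesis using Cons.prems fold_ended[of v c B \<beta> r ch t "x#xs" S p R us] by auto
  next
    case False
    define j where "j = ch t x S"
    define q where "q = min (p x) (marg v x (S j) / (\<beta> + r / B))"
    have j: "j \<in> {1..l}" using am unfolding argmax_rule_def j_def by blast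
    have pq: "\<forall>y. (p(x:=q)) y \<le> p y" using q_def by auto
    have st: "seller_step v c B \<beta> r ch t x (S,p,R,us,e) = (if c x \<le> q then (if v (insert x (S j)) - sum (p(x:=q)) (insert x (S j)) > r then (S, p(x:=q), R, {x}, True) else (S(j := insert x (S j)), p(x:=q), R, us, False)) else (S, p(x:=q), R - {x}, us, False))"
      using False by (simp add: seller_step_def j_def q_def Let_def)
    have f: "fold (seller_step v c B \<beta> r ch t) xs (seller_step v c B \<beta> r ch t x (S,p,R,us,e)) = (S',p',R',us',e')"
      using Cons.prems by simp
    show ?thesis
    proof (cases "c x \<le> q")
      case c1: True
      show ?thesis
      proof (cases "v (insert x (S j)) - sum (p(x:=q)) (insert x (S j)) > r")
        case True
        then have "(S', p', R', us', e') = (S, p(x:=q), R, {x}, True)"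
          using f st c1 True fold_ended[of v c B \<beta> r ch t xs S "p(x:=q)" R "{x}"] by simp
        then show ?thesis using True j pq False by auto
      next
        case c2: False
        then have ff: "fold (seller_step v c B \<beta> r ch t) xs (S(j := insert x (S j)), p(x:=q), R, us, False) = (S',p',R',us',e')"
          using f st c1 by simp
        note IH = Cons.IH[OF ff]
        show ?thesis
        proof (intro conjI)
          show "\<forall>y. p' y \<le> p y" using IH pq by (meson order_trans)
          show "\<forall>i. S i \<subseteq> S' i \<and> S' i \<subseteq> S i \<union> set (x # xs)"
            using IH by (auto split: if_splits)
        qed (use IH False j in \<open>auto split: if_splits\<close>)
      qed
    next
      case c1: False
      then have ff: "fold (seller_step v c B \<beta> r ch t) xs (S, p(x:=q), R - {x}, us, False) = (S',p',R',us',e')"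
        using f st by simp
      note IH = Cons.IH[OF ff]
      show ?thesis
      proof (intro conjI)
        show "\<forall>y. p' y \<le> p y" using IH pq by (meson order_trans)
      qed (use IH False in auto)
    qed
  qed
qed

lemma split_gain:
  assumes sm: "submod_on N v" and v0: "v {} = 0" and fin: "finite N"
    and u: "u \<in> N" and T: "T \<subseteq> N" and r: "r > 0"
    and g: "v (insert u T) - sum p (insert u T) > r"
  shows "v T - sum p T \<ge> r / 2 \<or> v {u} - sum p {u} \<ge> r / 2"
proof (cases "u \<in> T")
  case True
  then show ?thesis using g r by (simp add: insert_absorb)
next
  case False
  have fT: "finite T" using fin T finite_subset by blast
  have "marg v u T \<le> marg v u {}" using sm u T False unfolding submod_on_def by blast
  then have "v (insert u T) - v T \<le> v {u}" using v0 by (simp add: marg_def)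
  moreover have "sum p (insert u T) = p u + sum p T" using fT False by simp
  ultimately show ?thesis using g by auto
qed

lemma run_R:
  assumes am: "argmax_rule l v ch"
  shows "case run ord l v c B \<alpha> \<beta> \<epsilon> ch t of (_,_,_,R,_) \<Rightarrow> R \<subseteq> set ord"
proof (induction t)
  case 0
  then show ?case by auto
next
  case (Suc t)
  obtain A0 S0 p0 R0 us0 where g0: "run ord l v c B \<alpha> \<beta> \<epsilon> ch t = (A0, S0, p0, R0, us0)" by (metis prod_cases5)
  define cand1 where "cand1 = filter (\<lambda>u. u \<in> R0 \<and> u \<notin> (\<Union>i\<in>{1..l}. S0 i) \<and> u \<notin> us0) ord"
  obtain S1 p1 R1 us1 e1 where f1: "fold (seller_step v c B \<beta> (rho \<alpha> \<epsilon> (Suc t)) ch (Suc t)) cand1 ((\<lambda>_. {}), p0, R0, us0, False) = (S1, p1, R1, us1, e1)"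
    by (metis prod_cases5)
  have g1: "run ord l v c B \<alpha> \<beta> \<epsilon> ch (Suc t) = (S0, S1, p1, R1, us1)"
    using g0 f1 by (simp add: do_round_def Let_def cand1_def)
  have "R1 \<subseteq> R0" using fold_inv[OF am f1] by blast
  then show ?case using Suc g0 g1 by auto
qed

theorem lemma4p5:
  fixes ord :: "'a list" and v :: "'a set \<Rightarrow> real" and c :: "'a \<Rightarrow> real"
    and B \<alpha> \<beta> \<epsilon> :: real and l M :: nat
    and ch :: "nat \<Rightarrow> 'a \<Rightarrow> (nat \<Rightarrow> 'a set) \<Rightarrow> nat" and Sstar :: "'a set"
  assumes "distinct ord"
    and "v {} = 0" and "\<forall>X. X \<subseteq> set ord \<longrightarrow> v X \<ge> 0" and "submod_on (set ord) v"
    and "\<forall>u\<in>set ord. c u \<ge> 0"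
    and "B > 0" and "\<alpha> > 1" and "\<beta> > 1" and "\<epsilon> > 0" and "l \<in> {1, 2}"
    and "argmax_rule l v ch"
    and "M \<ge> 1" and "stops l (run ord l v c B \<alpha> \<beta> \<epsilon> ch M)"
    and "\<forall>t. 1 \<le> t \<and> t < M \<longrightarrow> \<not> stops l (run ord l v c B \<alpha> \<beta> \<epsilon> ch t)"
    and "M \<ge> 2"
    and "Sstar \<in> candidates l (run ord l v c B \<alpha> \<beta> \<epsilon> ch M)"
    and "\<forall>A \<in> candidates l (run ord l v c B \<alpha> \<beta> \<epsilon> ch M).
           v A - sum (final_prices (run ord l v c B \<alpha> \<beta> \<epsilon> ch M)) A
           \<le> v Sstar - sum (final_prices (run ord l v c B \<alpha> \<beta> \<epsilon> ch M)) Sstar"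
  shows "rho \<alpha> \<epsilon> M \<le> 2 * \<alpha> * (v Sstar - sum (final_prices (run ord l v c B \<alpha> \<beta> \<epsilon> ch M)) Sstar)"
proof -
  note am = assms(11)
  obtain k where M: "M = Suc (Suc k)" using assms(15) by (metis add_2_eq_Suc le_Suc_ex)
  let ?run = "run ord l v c B \<alpha> \<beta> \<epsilon> ch"
  let ?F = "\<lambda>t. fold (seller_step v c B \<beta> (rho \<alpha> \<epsilon> t) ch t)"
  obtain A0 S0 p0 R0 us0 where g0: "?run k = (A0, S0, p0, R0, us0)" by (metis prod_cases5)
  define cand1 where "cand1 = filter (\<lambda>u. u \<in> R0 \<and> u \<notin> (\<Union>i\<in>{1..l}. S0 i) \<and> u \<notin> us0) ord"
  obtain S1 p1 R1 us1 e1 where f1: "?F (Suc k) cand1 ((\<lambda>_. {}), p0, R0, us0, False) = (S1, p1, R1, us1, e1)"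
    by (metis prod_cases5)
  have g1: "?run (Suc k) = (S0, S1, p1, R1, us1)"
    using g0 f1 by (simp add: do_round_def Let_def cand1_def)
  define cand2 where "cand2 = filter (\<lambda>u. u \<in> R1 \<and> u \<notin> (\<Union>i\<in>{1..l}. S1 i) \<and> u \<notin> us1) ord"
  obtain S2 p2 R2 us2 e2 where f2: "?F (Suc (Suc k)) cand2 ((\<lambda>_. {}), p1, R1, us1, False) = (S2, p2, R2, us2, e2)"
    by (metis prod_cases5)
  have g2: "?run M = (S1, S2, p2, R2, us2)"
    using g1 f2 M by (simp add: do_round_def Let_def cand2_def)
  note I1 = fold_inv[OF am f1]
  note I2 = fold_inv[OF am f2]
  have ns: "\<not> stops l (?run (Suc k))" proof -
    have "1 \<le> Suc k \<and> Suc k < M" using M by simp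
    then show ?thesis using assms(14) by blast
  qed
  have e1: e1
  proof (rule ccontr)
    assume ne: "\<not> e1"
    have "R1 - ((\<Union>i\<in>{1..l}. S0 i \<union> S1 i) \<union> us1) = {}"
    proof -
      { fix x assume x: "x \<in> R1" "x \<notin> (\<Union>i\<in>{1..l}. S0 i \<union> S1 i)" "x \<notin> us1"
        have "x \<in> R0" using x I1 by blast
        have "us1 = us0" using I1 ne by blast
        have "x \<in> set ord"
          using run_R[OF am, of ord c B \<alpha> \<beta> \<epsilon> k] g0 \<open>x \<in> R0\<close> by auto
        then have "x \<in> set cand1" using x \<open>x \<in> R0\<close> \<open>us1 = us0\<close> unfolding cand1_def by auto
        then have False using I1 ne x by blast }
      then show ?thesis by blast
    qed
    then show False using ns g1 by (simp add: stops_def)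
  qed
  obtain u j where u: "u \<in> set cand1" "us1 = {u}" "j \<in> {1..l}"
     "rho \<alpha> \<epsilon> (Suc k) < v (insert u (S1 j)) - sum p1 (insert u (S1 j))"
    using I1 e1 by blast
  have fin: "finite (set ord)" by simp
  have uo: "u \<in> set ord" using u(1) unfolding cand1_def by auto
  have S1o: "S1 j \<subseteq> set ord" using I1 unfolding cand1_def by auto
  have rpos: "rho \<alpha> \<epsilon> t > 0" for t using assms(7,9) unfolding rho_def by simp
  have rmono: "rho \<alpha> \<epsilon> (Suc k) \<le> rho \<alpha> \<epsilon> M" using assms(7,9) M unfolding rho_def by simp
  have rM: "rho \<alpha> \<epsilon> M = \<alpha> * rho \<alpha> \<epsilon> (Suc k)" using assms(7) M unfolding rho_def by simp
  have fp: "final_prices (?run M) = p2" using g2 by (simp add: final_prices_def)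
  have cands: "candidates l (?run M) = S1 ` {1..l} \<union> S2 ` {1..l} \<union> {us2}"
    using g2 by (simp add: candidates_def)
  have p21: "\<forall>y. p2 y \<le> p1 y" using I2 by blast
  have "\<exists>A\<in>candidates l (?run M). v A - sum p2 A \<ge> rho \<alpha> \<epsilon> (Suc k) / 2"
  proof (cases e2)
    case True
    obtain u' j' where u': "u' \<in> set cand2" "us2 = {u'}" "j' \<in> {1..l}"
       "rho \<alpha> \<epsilon> M < v (insert u' (S2 j')) - sum p2 (insert u' (S2 j'))"
      using I2 True M by blast
    have uo': "u' \<in> set ord" using u'(1) unfolding cand2_def by auto
    have S2o: "S2 j' \<subseteq> set ord" using I2 unfolding cand2_def by auto
    have m1: "S2 j' \<in> candidates l (?run M)" "us2 \<in> candidates l (?run M)"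
      using cands u'(3) by auto
    from split_gain[OF assms(4) assms(2) fin uo' S2o rpos u'(4)]
    have "v (S2 j') - sum p2 (S2 j') \<ge> rho \<alpha> \<epsilon> M / 2 \<or> v us2 - sum p2 us2 \<ge> rho \<alpha> \<epsilon> M / 2"
      using u'(2) by simp
    then show ?thesis using rmono m1 by (smt (verit, best) field_sum_of_halves)
  next
    case False
    have "us2 = {u}" using I2 False u by blast
    from split_gain[OF assms(4) assms(2) fin uo S1o rpos u(4)]
    have "v (S1 j) - sum p1 (S1 j) \<ge> rho \<alpha> \<epsilon> (Suc k) / 2 \<or> v {u} - sum p1 {u} \<ge> rho \<alpha> \<epsilon> (Suc k) / 2" .
    moreover have "sum p2 (S1 j) \<le> sum p1 (S1 j)" "sum p2 {u} \<le> sum p1 {u}"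
      using p21 by (auto intro: sum_mono)
    moreover have m1: "S1 j \<in> candidates l (?run M)" "{u} \<in> candidates l (?run M)"
      using cands u(3) \<open>us2 = {u}\<close> by auto
    ultimately show ?thesis by (smt (verit, best))
  qed
  then obtain A where A: "A \<in> candidates l (?run M)" "v A - sum p2 A \<ge> rho \<alpha> \<epsilon> (Suc k) / 2" by blast
  have "v A - sum p2 A \<le> v Sstar - sum p2 Sstar" using assms(17) A(1) fp by auto
  then have h: "rho \<alpha> \<epsilon> (Suc k) \<le> 2 * (v Sstar - sum p2 Sstar)" using A(2) by (smt (verit) field_sum_of_halves)
  have "\<alpha> * rho \<alpha> \<epsilon> (Suc k) \<le> \<alpha> * (2 * (v Sstar - sum p2 Sstar))"
    using h assms(7) by (intro mult_left_mono) auto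
  then show ?thesis using rM fp by (simp add: algebra_simps)
qed

end
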